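(* Let $E$ be a set and $\mathrm{Dup}(E)$ the free duplicial algebra on $E$. Let $\{E,E\}\subseteq\mathrm{Dup}(E)$ be the smallest subspace containing $E$ and closed under the bracket $\{x,y\}=x\backslash y-x/y$. Then every element of $\mathrm{Dup}(E)$ is a finite linear combination of elements $z_1/z_2/\cdots/z_n$ with $n\ge1$ and $z_1,\dots,z_n\in\{E,E\}$.
   Context: A duplicial algebra over a field $K$ is a vector space $A$ with two bilinear products $/$ and $\backslash$ satisfying $x/(y/z)=(x/y)/z$, $x/(y\backslash z)=(x/y)\backslash z$ and $x\backslash(y\backslash z)=(x\backslash y)\backslash z$ for all $x,y,z\in A$. $\mathrm{Dup}(E)$ is the free duplicial algebra generated by the set $E$ (it can be realized on planar binary rooted trees with internal vertices coloured by $E$). The product $/$ is associative, so iterated products $z_1/\cdots/z_n$ are unambiguous. *)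

theory Defs
  imports "HOL-Library.Poly_Mapping"
begin

text \<open>Planar binary rooted trees whose internal vertices are coloured by elements of type 'e.
  Leaf is the tree without internal vertex (not part of the basis of Dup(E)).\<close>
datatype 'e pbtree = Leaf | Node "'e pbtree" 'e "'e pbtree"

fun over_tree :: "'e pbtree \<Rightarrow> 'e pbtree \<Rightarrow> 'e pbtree" where
  "over_tree x Leaf = x"
| "over_tree x (Node l e r) = Node (over_tree x l) e r"

fun under_tree :: "'e pbtree \<Rightarrow> 'e pbtree \<Rightarrow> 'e pbtree" where
  "under_tree Leaf y = y"
| "under_tree (Node l e r) y = Node l e (under_tree r y)"

type_synonym ('e,'k) vec = "'e pbtree \<Rightarrow>\<^sub>0 'k"

definition scal :: "'k::field \<Rightarrow> ('e,'k) vec \<Rightarrow> ('e,'k) vec" where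
  "scal c f = Poly_Mapping.map (\<lambda>x. c * x) f"

definition bilin :: "('e pbtree \<Rightarrow> 'e pbtree \<Rightarrow> 'e pbtree)
    \<Rightarrow> ('e,'k::field) vec \<Rightarrow> ('e,'k) vec \<Rightarrow> ('e,'k) vec" where
  "bilin op f g = (\<Sum>a\<in>Poly_Mapping.keys f. \<Sum>b\<in>Poly_Mapping.keys g.
      Poly_Mapping.single (op a b) (Poly_Mapping.lookup f a * Poly_Mapping.lookup g b))"

definition dup_over :: "('e,'k::field) vec \<Rightarrow> ('e,'k) vec \<Rightarrow> ('e,'k) vec" where
  "dup_over = bilin over_tree"

definition dup_under :: "('e,'k::field) vec \<Rightarrow> ('e,'k) vec \<Rightarrow> ('e,'k) vec" where
  "dup_under = bilin under_tree"

definition Dup :: "'e set \<Rightarrow> ('e,'k::field) vec set" where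
  "Dup E = {f. \<forall>t\<in>Poly_Mapping.keys f. t \<noteq> Leaf \<and> set_pbtree t \<subseteq> E}"

definition gen :: "'e \<Rightarrow> ('e,'k::field) vec" where
  "gen e = Poly_Mapping.single (Node Leaf e Leaf) 1"

definition bracket :: "('e,'k::field) vec \<Rightarrow> ('e,'k) vec \<Rightarrow> ('e,'k) vec" where
  "bracket x y = dup_under x y - dup_over x y"

inductive_set EE :: "'e set \<Rightarrow> ('e,'k::field) vec set" for E where
  gen: "e \<in> E \<Longrightarrow> gen e \<in> EE E"
| zero: "0 \<in> EE E"
| add: "x \<in> EE E \<Longrightarrow> y \<in> EE E \<Longrightarrow> x + y \<in> EE E"
| smult: "x \<in> EE E \<Longrightarrow> scal c x \<in> EE E"
| brk: "x \<in> EE E \<Longrightarrow> y \<in> EE E \<Longrightarrow> bracket x y \<in> EE E"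

fun over_list :: "('e,'k::field) vec list \<Rightarrow> ('e,'k) vec" where
  "over_list [] = 0"
| "over_list [z] = z"
| "over_list (z # zs) = dup_over z (over_list zs)"

end

theory Submission
  imports Defs
begin

abbreviation lk where "lk \<equiv> Poly_Mapping.lookup"

lemma scal_lookup: "lk (scal c f) a = c * lk f a"
  unfolding scal_def by transfer (simp add: when_def)

lemma scal_add: "scal c (f + g) = scal c f + scal c g"
  by (rule poly_mapping_eqI) (simp add: scal_lookup lookup_add distrib_left)

lemma scal_zero[simp]: "scal c 0 = 0"
  by (rule poly_mapping_eqI) (simp add: scal_lookup)

lemma scal_single: "scal c (Poly_Mapping.single a d) = Poly_Mapping.single a (c * d)"
  by (rule poly_mapping_eqI) (simp add: scal_lookup lookup_single when_def)

lemma scal_sum: "scal c (sum F S) = (\<Sum>s\<in>S. scal c (F s))"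
  by (induction S rule: infinite_finite_induct) (simp_all add: scal_add)

lemma scal_one: "scal 1 f = f"
  by (rule poly_mapping_eqI) (simp add: scal_lookup)

lemma scal_scal: "scal c (scal d f) = scal (c * d) f"
  by (rule poly_mapping_eqI) (simp add: scal_lookup)

lemma scal_m1: "scal (-1) f = - f"
  by (rule poly_mapping_eqI) (simp add: scal_lookup)

lemma keys_scal: "Poly_Mapping.keys (scal c f) \<subseteq> Poly_Mapping.keys f"
  by (auto simp: in_keys_iff scal_lookup)

lemma expansion: "f = (\<Sum>a\<in>Poly_Mapping.keys f. Poly_Mapping.single a (lk f a))"
proof -
  have *: "finite I \<Longrightarrow> lk (\<Sum>a\<in>I. Poly_Mapping.single a (lk f a)) j = (if j \<in> I then lk f j else 0)" for I j
    by (induction I rule: finite_induct) (auto simp: lookup_single lookup_add when_def)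
  show ?thesis by (rule poly_mapping_eqI) (fastforce simp add: in_keys_iff *)
qed

lemma bilin_eq:
  assumes "finite A" "finite B" "Poly_Mapping.keys f \<subseteq> A" "Poly_Mapping.keys g \<subseteq> B"
  shows "bilin op f g = (\<Sum>a\<in>A. \<Sum>b\<in>B. Poly_Mapping.single (op a b) (lk f a * lk g b))"
proof -
  have "bilin op f g = (\<Sum>a\<in>Poly_Mapping.keys f. \<Sum>b\<in>B. Poly_Mapping.single (op a b) (lk f a * lk g b))"
    unfolding bilin_def
    apply (rule sum.cong[OF refl])
    apply (rule sum.mono_neutral_left)
    using assms by (auto simp: in_keys_iff)
  also have "\<dots> = (\<Sum>a\<in>A. \<Sum>b\<in>B. Poly_Mapping.single (op a b) (lk f a * lk g b))"
    apply (rule sum.mono_neutral_left)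
    using assms by (auto simp: in_keys_iff)
  finally show ?thesis .
qed

lemma bilin_add1: "bilin op (f + g) h = bilin op f h + bilin op g h"
proof -
  let ?A = "Poly_Mapping.keys f \<union> Poly_Mapping.keys g"
  have "bilin op (f + g) h = (\<Sum>a\<in>?A. \<Sum>b\<in>Poly_Mapping.keys h. Poly_Mapping.single (op a b) (lk (f+g) a * lk h b))"
    by (rule bilin_eq) (auto simp: keys_add)
  moreover have "bilin op f h = (\<Sum>a\<in>?A. \<Sum>b\<in>Poly_Mapping.keys h. Poly_Mapping.single (op a b) (lk f a * lk h b))"
    by (rule bilin_eq) auto
  moreover have "bilin op g h = (\<Sum>a\<in>?A. \<Sum>b\<in>Poly_Mapping.keys h. Poly_Mapping.single (op a b) (lk g a * lk h b))"
    by (rule bilin_eq) auto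
  ultimately show ?thesis
    by (simp add: lookup_add distrib_right single_add sum.distrib)
qed

lemma bilin_add2: "bilin op h (f + g) = bilin op h f + bilin op h g"
proof -
  let ?A = "Poly_Mapping.keys f \<union> Poly_Mapping.keys g"
  have "bilin op h (f + g) = (\<Sum>b\<in>Poly_Mapping.keys h. \<Sum>a\<in>?A. Poly_Mapping.single (op b a) (lk h b * lk (f+g) a))"
    by (rule bilin_eq) (auto simp: keys_add)
  moreover have "bilin op h f = (\<Sum>b\<in>Poly_Mapping.keys h. \<Sum>a\<in>?A. Poly_Mapping.single (op b a) (lk h b * lk f a))"
    by (rule bilin_eq) auto
  moreover have "bilin op h g = (\<Sum>b\<in>Poly_Mapping.keys h. \<Sum>a\<in>?A. Poly_Mapping.single (op b a) (lk h b * lk g a))"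
    by (rule bilin_eq) auto
  ultimately show ?thesis
    by (simp add: lookup_add distrib_left single_add sum.distrib)
qed

lemma bilin_scal1: "bilin op (scal c f) g = scal c (bilin op f g)"
proof -
  have "bilin op (scal c f) g = (\<Sum>a\<in>Poly_Mapping.keys f. \<Sum>b\<in>Poly_Mapping.keys g. Poly_Mapping.single (op a b) (lk (scal c f) a * lk g b))"
    by (rule bilin_eq) (auto simp: keys_scal[THEN subsetD])
  then show ?thesis unfolding bilin_def[of op f g]
    by (simp add: scal_sum scal_single scal_lookup mult.assoc)
qed

lemma bilin_scal2: "bilin op f (scal c g) = scal c (bilin op f g)"
proof -
  have "bilin op f (scal c g) = (\<Sum>a\<in>Poly_Mapping.keys f. \<Sum>b\<in>Poly_Mapping.keys g. Poly_Mapping.single (op a b) (lk f a * lk (scal c g) b))"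
    by (rule bilin_eq) (auto simp: keys_scal[THEN subsetD])
  then show ?thesis unfolding bilin_def[of op f g]
    by (simp add: scal_sum scal_single scal_lookup mult.left_commute)
qed

lemma bilin_zero1[simp]: "bilin op 0 g = 0"
  by (simp add: bilin_def)

lemma bilin_zero2[simp]: "bilin op f 0 = 0"
  by (simp add: bilin_def)

lemma bilin_sum1: "bilin op (sum F S) g = (\<Sum>s\<in>S. bilin op (F s) g)"
  by (induction S rule: infinite_finite_induct) (simp_all add: bilin_add1)

lemma bilin_sum2: "bilin op g (sum F S) = (\<Sum>s\<in>S. bilin op g (F s))"
  by (induction S rule: infinite_finite_induct) (simp_all add: bilin_add2)

lemma bilin_single1: "bilin op (Poly_Mapping.single a c) g
   = (\<Sum>b\<in>Poly_Mapping.keys g. Poly_Mapping.single (op a b) (c * lk g b))"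
  by (subst bilin_eq[of "{a}" "Poly_Mapping.keys g"]) auto

lemma bilin_single2: "bilin op f (Poly_Mapping.single b d)
   = (\<Sum>a\<in>Poly_Mapping.keys f. Poly_Mapping.single (op a b) (lk f a * d))"
  by (subst bilin_eq[of "Poly_Mapping.keys f" "{b}"]) auto

lemma bilin_single_single: "bilin op (Poly_Mapping.single a 1) (Poly_Mapping.single b 1)
   = (Poly_Mapping.single (op a b) 1 :: ('e,'k::field) vec)"
  by (simp add: bilin_single1)

lemma bilin_assoc_gen:
  assumes "\<And>a b c. a \<in> Poly_Mapping.keys x \<Longrightarrow> b \<in> Poly_Mapping.keys y \<Longrightarrow> c \<in> Poly_Mapping.keys z
     \<Longrightarrow> op1 a (op2 b c) = op3 (op4 a b) c"
  shows "bilin op1 x (bilin op2 y z) = bilin op3 (bilin op4 x y) z"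
proof -
  have "bilin op1 x (bilin op2 y z) = (\<Sum>b\<in>Poly_Mapping.keys y. \<Sum>c\<in>Poly_Mapping.keys z. \<Sum>a\<in>Poly_Mapping.keys x.
      Poly_Mapping.single (op1 a (op2 b c)) (lk x a * (lk y b * lk z c)))"
    unfolding bilin_def[of op2 y z] by (simp only: bilin_sum2 bilin_single2)
  also have "\<dots> = (\<Sum>b\<in>Poly_Mapping.keys y. \<Sum>a\<in>Poly_Mapping.keys x. \<Sum>c\<in>Poly_Mapping.keys z.
      Poly_Mapping.single (op1 a (op2 b c)) (lk x a * (lk y b * lk z c)))"
    by (rule sum.cong[OF refl], rule sum.swap)
  also have "\<dots> = (\<Sum>a\<in>Poly_Mapping.keys x. \<Sum>b\<in>Poly_Mapping.keys y. \<Sum>c\<in>Poly_Mapping.keys z.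
      Poly_Mapping.single (op1 a (op2 b c)) (lk x a * (lk y b * lk z c)))"
    by (rule sum.swap)
  also have "\<dots> = (\<Sum>a\<in>Poly_Mapping.keys x. \<Sum>b\<in>Poly_Mapping.keys y. \<Sum>c\<in>Poly_Mapping.keys z.
      Poly_Mapping.single (op3 (op4 a b) c) (lk x a * lk y b * lk z c))"
    by (intro sum.cong refl) (simp add: assms mult.assoc)
  also have "\<dots> = bilin op3 (bilin op4 x y) z"
    unfolding bilin_def[of op4 x y] by (simp only: bilin_sum1 bilin_single1)
  finally show ?thesis .
qed

lemma over_tree_assoc: "over_tree x (over_tree y z) = over_tree (over_tree x y) z"
  by (induction z) auto

lemma under_tree_assoc: "under_tree x (under_tree y z) = under_tree (under_tree x y) z"
  by (induction x) auto

lemma over_under_tree: "y \<noteq> Leaf \<Longrightarrow> over_tree x (under_tree y z) = under_tree (over_tree x y) z"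
  by (cases y) auto

lemma o_assoc: "dup_over x (dup_over y z) = dup_over (dup_over x y) z"
  unfolding dup_over_def by (rule bilin_assoc_gen) (simp add: over_tree_assoc)

lemma u_assoc: "dup_under x (dup_under y z) = dup_under (dup_under x y) z"
  unfolding dup_under_def by (rule bilin_assoc_gen) (simp add: under_tree_assoc)

definition NL :: "('e,'k::field) vec \<Rightarrow> bool" where
  "NL f \<longleftrightarrow> Leaf \<notin> Poly_Mapping.keys f"

lemma ou: "NL y \<Longrightarrow> dup_over x (dup_under y z) = dup_under (dup_over x y) z"
  unfolding dup_over_def dup_under_def NL_def
  by (rule bilin_assoc_gen) (auto intro: over_under_tree)

lemma NL_bilin:
  assumes "\<And>a b. op a b = Leaf \<Longrightarrow> a = Leaf \<and> b = Leaf" "NL f"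
  shows "NL (bilin op f g)"
proof -
  have "lk (bilin op f g) Leaf = 0"
    unfolding bilin_def lookup_sum
  proof (intro sum.neutral ballI)
    fix a b assume "a \<in> Poly_Mapping.keys f" "b \<in> Poly_Mapping.keys g"
    then have "a \<noteq> Leaf" using assms(2) by (auto simp: NL_def)
    then have "op a b \<noteq> Leaf" using assms(1) by blast
    then show "lk (Poly_Mapping.single (op a b) (lk f a * lk g b)) Leaf = 0"
      by (rule lookup_single_not_eq)
  qed
  then show ?thesis by (simp add: NL_def in_keys_iff)
qed

lemma over_tree_Leaf: "over_tree a b = Leaf \<Longrightarrow> a = Leaf \<and> b = Leaf"
  by (cases b) auto

lemma under_tree_Leaf: "under_tree a b = Leaf \<Longrightarrow> a = Leaf \<and> b = Leaf"
  by (cases a) auto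

lemma NL_o: "NL f \<Longrightarrow> NL (dup_over f g)"
  unfolding dup_over_def by (rule NL_bilin) (auto dest: over_tree_Leaf)

lemma NL_u: "NL f \<Longrightarrow> NL (dup_under f g)"
  unfolding dup_under_def by (rule NL_bilin) (auto dest: under_tree_Leaf)

lemma NL_add: "NL f \<Longrightarrow> NL g \<Longrightarrow> NL (f + g)"
  by (auto simp: NL_def in_keys_iff lookup_add)

lemma NL_diff: "NL f \<Longrightarrow> NL g \<Longrightarrow> NL (f - g)"
  by (auto simp: NL_def in_keys_iff lookup_minus)

lemma NL_scal: "NL f \<Longrightarrow> NL (scal c f)"
  using keys_scal by (auto simp: NL_def)

lemma EE_NL: "x \<in> EE E \<Longrightarrow> NL x"
proof (induction rule: EE.induct)
  case (gen e)
  then show ?case by (simp add: NL_def gen_def)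
next
  case zero
  then show ?case by (simp add: NL_def)
next
  case (add x y)
  then show ?case by (simp add: NL_add)
next
  case (smult x c)
  then show ?case by (simp add: NL_scal)
next
  case (brk x y)
  then show ?case by (simp add: bracket_def NL_diff NL_u NL_o)
qed

lemma EE_diff: "x \<in> EE E \<Longrightarrow> y \<in> EE E \<Longrightarrow> x - y \<in> EE E"
  using EE.add[OF _ EE.smult[of y E "-1"]] by (simp add: scal_m1)

lemma over_list_cons: "zs \<noteq> [] \<Longrightarrow> over_list (z # zs) = dup_over z (over_list zs)"
  by (cases zs) auto

lemma over_list_append: "zs \<noteq> [] \<Longrightarrow> ws \<noteq> [] \<Longrightarrow> over_list (zs @ ws) = dup_over (over_list zs) (over_list ws)"
proof (induction zs rule: over_list.induct)
  case (3 z v vs)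
  then show ?case by (simp add: over_list_cons o_assoc)
qed (auto simp: over_list_cons)

lemma over_list_NL: "zs \<noteq> [] \<Longrightarrow> set zs \<subseteq> EE E \<Longrightarrow> NL (over_list zs)"
  by (induction zs rule: over_list.induct) (auto simp: EE_NL NL_o)

inductive_set T1 :: "'e set \<Rightarrow> ('e,'k::field) vec set" for E where
  base: "zs \<noteq> [] \<Longrightarrow> set zs \<subseteq> EE E \<Longrightarrow> over_list zs \<in> T1 E"
| zero: "0 \<in> T1 E"
| add: "x \<in> T1 E \<Longrightarrow> y \<in> T1 E \<Longrightarrow> x + y \<in> T1 E"
| smult: "x \<in> T1 E \<Longrightarrow> scal c x \<in> T1 E"

inductive_set T2 :: "'e set \<Rightarrow> ('e,'k::field) vec set" for E where
  base: "x \<in> EE E \<Longrightarrow> x \<in> T2 E"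
| zero: "0 \<in> T2 E"
| add: "x \<in> T2 E \<Longrightarrow> y \<in> T2 E \<Longrightarrow> x + y \<in> T2 E"
| smult: "x \<in> T2 E \<Longrightarrow> scal c x \<in> T2 E"
| und: "x \<in> T2 E \<Longrightarrow> y \<in> T2 E \<Longrightarrow> dup_under x y \<in> T2 E"

lemma T1_diff: "x \<in> T1 E \<Longrightarrow> y \<in> T1 E \<Longrightarrow> x - y \<in> T1 E"
  using T1.add[OF _ T1.smult[of y E "-1"]] by (simp add: scal_m1)

lemma T2_diff: "x \<in> T2 E \<Longrightarrow> y \<in> T2 E \<Longrightarrow> x - y \<in> T2 E"
  using T2.add[OF _ T2.smult[of y E "-1"]] by (simp add: scal_m1)

lemma T1_EE: "x \<in> EE E \<Longrightarrow> x \<in> T1 E"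
  using T1.base[of "[x]" E] by simp

lemma T1_NL: "x \<in> T1 E \<Longrightarrow> NL x"
  by (induction rule: T1.induct) (auto simp: over_list_NL NL_add NL_scal NL_def[of 0])

lemma T2_NL: "x \<in> T2 E \<Longrightarrow> NL x"
  by (induction rule: T2.induct) (auto simp: EE_NL NL_add NL_scal NL_u NL_def[of 0])

lemma T1_over: "x \<in> T1 E \<Longrightarrow> y \<in> T1 E \<Longrightarrow> dup_over x y \<in> T1 E"
proof (induction x rule: T1.induct)
  case (base zs)
  from base.prems show ?case
  proof (induction y rule: T1.induct)
    case (base ws)
    then show ?case using T1.base[of "zs @ ws" E] \<open>zs \<noteq> []\<close> \<open>set zs \<subseteq> EE E\<close>
      by (simp add: over_list_append)
  next
    case zero then show ?case by (simp add: dup_over_def T1.zero)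
  next
    case (add x y) then show ?case by (simp add: dup_over_def bilin_add2 T1.add)
  next
    case (smult x c) then show ?case by (simp add: dup_over_def bilin_scal2 T1.smult)
  qed
next
  case zero then show ?case by (simp add: dup_over_def T1.zero)
next
  case (add x y) then show ?case by (simp add: dup_over_def bilin_add1 T1.add)
next
  case (smult x c) then show ?case by (simp add: dup_over_def bilin_scal1 T1.smult)
qed

lemma lemA_base: "zs \<noteq> [] \<Longrightarrow> set zs \<subseteq> EE E \<Longrightarrow> y \<in> EE E \<Longrightarrow> dup_under (over_list zs) y \<in> T1 E"
proof (induction zs rule: over_list.induct)
  case (2 z)
  have "dup_under z y = bracket z y + dup_over z y" by (simp add: bracket_def)
  moreover have "bracket z y \<in> T1 E" using 2 by (auto intro: T1_EE EE.brk)
  moreover have "dup_over z y \<in> T1 E" using 2 by (auto intro: T1_over T1_EE)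
  ultimately show ?case by (auto intro: T1.add)
next
  case (3 z v vs)
  have "dup_under (over_list (z # v # vs)) y = dup_over z (dup_under (over_list (v # vs)) y)"
    using 3 by (simp add: ou[OF over_list_NL[of "v # vs" E]])
  then show ?case using 3 by (auto intro: T1_over T1_EE)
qed simp

lemma lemA: "x \<in> T1 E \<Longrightarrow> y \<in> EE E \<Longrightarrow> dup_under x y \<in> T1 E"
proof (induction x rule: T1.induct)
  case (base zs) then show ?case by (rule lemA_base)
qed (simp_all add: dup_under_def bilin_add1 bilin_scal1 T1.zero T1.add T1.smult)

lemma lemA': "w \<in> T2 E \<Longrightarrow> x \<in> T1 E \<Longrightarrow> dup_under x w \<in> T1 E"
proof (induction w arbitrary: x rule: T2.induct)
  case (base w) then show ?case by (simp add: lemA)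
next
  case (und a b)
  then show ?case by (simp add: u_assoc)
qed (simp_all add: lemA dup_under_def bilin_add2 bilin_scal2 T1.zero T1.add T1.smult)

lemma lemB: "x \<in> T2 E \<Longrightarrow> y \<in> EE E \<Longrightarrow> dup_over y x \<in> T2 E"
proof (induction x rule: T2.induct)
  case (base x)
  have "dup_over y x = dup_under y x - bracket y x" by (simp add: bracket_def)
  moreover have "dup_under y x - bracket y x \<in> T2 E"
    using base by (intro T2_diff T2.und T2.base EE.brk) auto
  ultimately show ?case by simp
next
  case (und a b)
  then show ?case by (simp add: ou T2_NL T2.und)
qed (simp_all add: dup_over_def bilin_add2 bilin_scal2 T2.zero T2.add T2.smult)

lemma lemB_base: "zs \<noteq> [] \<Longrightarrow> set zs \<subseteq> EE E \<Longrightarrow> x \<in> T2 E \<Longrightarrow> dup_over (over_list zs) x \<in> T2 E"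
proof (induction zs rule: over_list.induct)
  case (3 z v vs)
  then show ?case by (simp add: o_assoc[symmetric] lemB)
qed (auto simp: lemB)

lemma lemB': "w \<in> T1 E \<Longrightarrow> x \<in> T2 E \<Longrightarrow> dup_over w x \<in> T2 E"
proof (induction w rule: T1.induct)
  case (base zs) then show ?case by (rule lemB_base)
next
  case zero then show ?case by (simp add: dup_over_def T2.zero)
next
  case (add a b)
  then have "dup_over a x \<in> T2 E" "dup_over b x \<in> T2 E" by auto
  then show ?case by (simp add: dup_over_def bilin_add1 T2.add)
next
  case (smult a c)
  then have "dup_over a x \<in> T2 E" by auto
  then show ?case by (simp add: dup_over_def bilin_scal1 T2.smult)
qed

lemma T1_sum: "(\<And>s. s \<in> S \<Longrightarrow> F s \<in> T1 E) \<Longrightarrow> sum F S \<in> T1 E"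
  by (induction S rule: infinite_finite_induct) (simp_all add: T1.zero T1.add)

lemma tree_T: "t \<noteq> Leaf \<Longrightarrow> set_pbtree t \<subseteq> E
  \<Longrightarrow> (Poly_Mapping.single t 1 :: ('e,'k::field) vec) \<in> T1 E \<and> (Poly_Mapping.single t 1 :: ('e,'k) vec) \<in> T2 E"
proof (induction t)
  case Leaf
  then show ?case by simp
next
  case (Node l e r)
  define g :: "('e,'k) vec" where "g = gen e"
  have gE: "g \<in> EE E" using Node.prems by (auto simp: g_def intro: EE.gen)
  have g1: "g \<in> T1 E" using gE by (rule T1_EE)
  have g2: "g \<in> T2 E" using gE by (rule T2.base)
  have hu: "dup_under g (Poly_Mapping.single r 1) = Poly_Mapping.single (Node Leaf e r) 1"
    by (simp add: g_def gen_def dup_under_def bilin_single_single)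
  have ho: "dup_over (Poly_Mapping.single l 1) g = (Poly_Mapping.single (Node l e Leaf) 1 :: ('e,'k) vec)"
    by (simp add: g_def gen_def dup_over_def bilin_single_single)
  have hb1: "dup_over (Poly_Mapping.single l 1) (Poly_Mapping.single (Node Leaf e r) 1)
      = (Poly_Mapping.single (Node l e r) 1 :: ('e,'k) vec)"
    by (simp add: dup_over_def bilin_single_single)
  have hb2: "dup_under (Poly_Mapping.single (Node l e Leaf) 1) (Poly_Mapping.single r 1)
      = (Poly_Mapping.single (Node l e r) 1 :: ('e,'k) vec)"
    by (simp add: dup_under_def bilin_single_single)
  show ?case
  proof (cases "l = Leaf")
    case True
    note lL = True
    show ?thesis
    proof (cases "r = Leaf")
      case True
      then show ?thesis using lL g1 g2 by (simp add: g_def gen_def)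
    next
      case False
      then have r2: "(Poly_Mapping.single r 1 :: ('e,'k) vec) \<in> T2 E" using Node by auto
      have "dup_under g (Poly_Mapping.single r 1) \<in> T1 E" using lemA'[OF r2 g1] .
      moreover have "dup_under g (Poly_Mapping.single r 1) \<in> T2 E" using T2.und[OF g2 r2] .
      ultimately show ?thesis using lL hu by simp
    qed
  next
    case False
    note lL = False
    then have l1: "(Poly_Mapping.single l 1 :: ('e,'k) vec) \<in> T1 E" using Node by auto
    have lg1: "(Poly_Mapping.single (Node l e Leaf) 1 :: ('e,'k) vec) \<in> T1 E"
      using T1_over[OF l1 g1] ho by simp
    have lg2: "(Poly_Mapping.single (Node l e Leaf) 1 :: ('e,'k) vec) \<in> T2 E"
      using lemB'[OF l1 g2] ho by simp
    show ?thesis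
    proof (cases "r = Leaf")
      case True
      then show ?thesis using lg1 lg2 by simp
    next
      case False
      then have r2: "(Poly_Mapping.single r 1 :: ('e,'k) vec) \<in> T2 E" using Node by auto
      have "(Poly_Mapping.single (Node Leaf e r) 1 :: ('e,'k) vec) \<in> T1 E"
        using lemA'[OF r2 g1] hu by simp
      then have "(Poly_Mapping.single (Node l e r) 1 :: ('e,'k) vec) \<in> T1 E"
        using T1_over[OF l1] hb1 by metis
      moreover have "(Poly_Mapping.single (Node l e r) 1 :: ('e,'k) vec) \<in> T2 E"
        using T2.und[OF lg2 r2] hb2 by simp
      ultimately show ?thesis by simp
    qed
  qed
qed

lemma Dup_T1: "f \<in> Dup E \<Longrightarrow> f \<in> T1 E"
proof -
  assume f: "f \<in> Dup E"
  have "f = (\<Sum>a\<in>Poly_Mapping.keys f. scal (lk f a) (Poly_Mapping.single a 1))"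
    by (subst expansion) (simp add: scal_single)
  also have "\<dots> \<in> T1 E"
  proof (rule T1_sum)
    fix a assume "a \<in> Poly_Mapping.keys f"
    then have "a \<noteq> Leaf" "set_pbtree a \<subseteq> E" using f by (auto simp: Dup_def)
    then show "scal (lk f a) (Poly_Mapping.single a 1) \<in> T1 E"
      using tree_T by (blast intro: T1.smult)
  qed
  finally show ?thesis .
qed

lemma sum_split: "(\<Sum>i<m+(n::nat). (F i::'a::comm_monoid_add)) = (\<Sum>i<m. F i) + (\<Sum>i<n. F (m+i))"
  by (induction n) (simp_all add: add_ac)

lemma T1_repr: "x \<in> T1 E \<Longrightarrow> \<exists>m (c :: nat \<Rightarrow> 'k) (zs :: nat \<Rightarrow> ('e,'k::field) vec list).
           (\<forall>i<m. zs i \<noteq> [] \<and> set (zs i) \<subseteq> EE E) \<and>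
           x = (\<Sum>i<m. scal (c i) (over_list (zs i)))"
proof (induction rule: T1.induct)
  case (base zs)
  then show ?case
    by (intro exI[of _ 1] exI[of _ "\<lambda>_. 1"] exI[of _ "\<lambda>_. zs"]) (simp add: scal_one)
next
  case zero
  then show ?case by (intro exI[of _ 0]) simp
next
  case (add x y)
  obtain m1 c1 zs1 where
    1: "\<forall>i<(m1::nat). zs1 i \<noteq> [] \<and> set (zs1 i) \<subseteq> EE E" "x = (\<Sum>i<m1. scal (c1 i) (over_list (zs1 i)))"
    using add.IH(1) by blast
  obtain m2 c2 zs2 where
    2: "\<forall>i<(m2::nat). zs2 i \<noteq> [] \<and> set (zs2 i) \<subseteq> EE E" "y = (\<Sum>i<m2. scal (c2 i) (over_list (zs2 i)))"
    using add.IH(2) by blast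
  define c where "c i = (if i < m1 then c1 i else c2 (i - m1))" for i
  define zs where "zs i = (if i < m1 then zs1 i else zs2 (i - m1))" for i
  have s1: "(\<Sum>i<m1. scal (c i) (over_list (zs i))) = (\<Sum>i<m1. scal (c1 i) (over_list (zs1 i)))"
    by (rule sum.cong) (auto simp: c_def zs_def)
  have s2: "(\<Sum>i<m2. scal (c (m1+i)) (over_list (zs (m1+i)))) = (\<Sum>i<m2. scal (c2 i) (over_list (zs2 i)))"
    by (rule sum.cong) (auto simp: c_def zs_def)
  have "(\<Sum>i<m1+m2. scal (c i) (over_list (zs i))) = x + y"
    by (simp only: sum_split s1 s2 1(2) 2(2))
  moreover have "\<forall>i<m1+m2. zs i \<noteq> [] \<and> set (zs i) \<subseteq> EE E"
    using 1 2 by (auto simp: zs_def)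
  ultimately show ?case by (intro exI[of _ "m1+m2"] exI[of _ c] exI[of _ zs]) simp
next
  case (smult x d)
  obtain m c zs where
    1: "\<forall>i<(m::nat). zs i \<noteq> [] \<and> set (zs i) \<subseteq> EE E" "x = (\<Sum>i<m. scal (c i) (over_list (zs i)))"
    using smult.IH by blast
  have "scal d x = (\<Sum>i<m. scal (d * c i) (over_list (zs i)))"
    unfolding 1 by (simp add: scal_sum scal_scal)
  then show ?case using 1(1) by (intro exI[of _ m] exI[of _ "\<lambda>i. d * c i"] exI[of _ zs]) simp
qed

theorem mainTheorem20:
  fixes E :: "'e set" and f :: "('e, 'k::field) vec"
  assumes "f \<in> Dup E"
  shows "\<exists>m (c :: nat \<Rightarrow> 'k) (zs :: nat \<Rightarrow> ('e,'k) vec list).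
           (\<forall>i<m. zs i \<noteq> [] \<and> set (zs i) \<subseteq> EE E) \<and>
           f = (\<Sum>i<m. scal (c i) (over_list (zs i)))"
  using T1_repr[OF Dup_T1[OF assms]] .

end
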